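(* Let $\oplus$ be a combinator whose domain is the set of all pairs of tpos over $W$. Then $\oplus$ is a TeamQueue combinator if and only if $\oplus$ is basic and satisfies ($\oplus$TRI): for every pair $\langle\preceq_1,\preceq_2\rangle$ and every $S \subseteq W$, $\min(\preceq_{1\oplus 2}, S)$ is equal to one of $\min(\preceq_1, S)$, $\min(\preceq_2, S)$, or $\min(\preceq_1, S) \cup \min(\preceq_2, S)$.
   Context: $W$ is a finite nonempty set (of possible worlds). A tpo is a total preorder on $W$. For $S \subseteq W$, $\min(\preceq, S) = \{x \in S : x \preceq y \text{ for all } y \in S\}$. A combinator $\oplus$ maps pairs of tpos $\langle\preceq_1,\preceq_2\rangle$ in its domain to a tpo $\preceq_{1\oplus 2}$. It is basic if $\min(\preceq_{1\oplus 2}, W) = \min(\preceq_1, W) \cup \min(\preceq_2, W)$ for every pair in its domain. $\oplus$ is a TeamQueue combinator if for each pair $\langle\preceq_1,\preceq_2\rangle$ in its domain there is a sequence $\langle a(i)\rangle_{i \in \mathbb{N}}$ (depending on the pair) with $\emptyset \neq a(i) \subseteq \{1,2\}$ for all $i$ and $a(1) = \{1,2\}$, such that $\preceq_{1\oplus 2}$ is the tpo whose ordered partition into ranks (most plausible first) is $\langle T_1, \ldots, T_m\rangle$, where inductively $T_i = \bigcup_{j \in a(i)} \min(\preceq_j, \bigcap_{k<i} T_k^c)$ ($T^c$ the complement in $W$) and $m$ is minimal with $\bigcup_{i \le m} T_i = W$. *)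

theory Defs
  imports Main
begin

text \<open>The set W of worlds is modelled by a finite type 'w (types are nonempty).
  A relation R relates x to y when x is at least as plausible as y (x \<preceq> y).\<close>

definition tpo :: "'w rel \<Rightarrow> bool" where
  "tpo R \<longleftrightarrow> (\<forall>x y. (x, y) \<in> R \<or> (y, x) \<in> R) \<and> trans R"

definition minS :: "'w rel \<Rightarrow> 'w set \<Rightarrow> 'w set" where
  "minS R S = {x \<in> S. \<forall>y \<in> S. (x, y) \<in> R}"

definition pick :: "'w rel \<Rightarrow> 'w rel \<Rightarrow> nat \<Rightarrow> 'w rel" where
  "pick R1 R2 j = (if j = 1 then R1 else R2)"

text \<open>tq_rest R1 R2 a i = complement of T_1 \<union> ... \<union> T_i (so tq_rest _ _ _ 0 = W).\<close>
primrec tq_rest :: "'w rel \<Rightarrow> 'w rel \<Rightarrow> (nat \<Rightarrow> nat set) \<Rightarrow> nat \<Rightarrow> 'w set" where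
  "tq_rest R1 R2 a 0 = UNIV"
| "tq_rest R1 R2 a (Suc i) =
     tq_rest R1 R2 a i - (\<Union>j \<in> a (Suc i). minS (pick R1 R2 j) (tq_rest R1 R2 a i))"

definition tq_T :: "'w rel \<Rightarrow> 'w rel \<Rightarrow> (nat \<Rightarrow> nat set) \<Rightarrow> nat \<Rightarrow> 'w set" where
  "tq_T R1 R2 a i = (\<Union>j \<in> a i. minS (pick R1 R2 j) (tq_rest R1 R2 a (i - 1)))"

definition combinator :: "('w rel \<Rightarrow> 'w rel \<Rightarrow> 'w rel) \<Rightarrow> bool" where
  "combinator c \<longleftrightarrow> (\<forall>R1 R2. tpo R1 \<longrightarrow> tpo R2 \<longrightarrow> tpo (c R1 R2))"

definition basic :: "('w rel \<Rightarrow> 'w rel \<Rightarrow> 'w rel) \<Rightarrow> bool" where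
  "basic c \<longleftrightarrow> (\<forall>R1 R2. tpo R1 \<longrightarrow> tpo R2 \<longrightarrow>
      minS (c R1 R2) UNIV = minS R1 UNIV \<union> minS R2 UNIV)"

definition TRI :: "('w rel \<Rightarrow> 'w rel \<Rightarrow> 'w rel) \<Rightarrow> bool" where
  "TRI c \<longleftrightarrow> (\<forall>R1 R2 S. tpo R1 \<longrightarrow> tpo R2 \<longrightarrow>
      minS (c R1 R2) S = minS R1 S \<or> minS (c R1 R2) S = minS R2 S \<or>
      minS (c R1 R2) S = minS R1 S \<union> minS R2 S)"

text \<open>The tpo whose ordered partition into ranks is T_1, ..., T_m with m minimal
  such that T_1 \<union> ... \<union> T_m = W (layers beyond m are empty).\<close>
definition teamqueue :: "('w rel \<Rightarrow> 'w rel \<Rightarrow> 'w rel) \<Rightarrow> bool" where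
  "teamqueue c \<longleftrightarrow> (\<forall>R1 R2. tpo R1 \<longrightarrow> tpo R2 \<longrightarrow>
     (\<exists>a :: nat \<Rightarrow> nat set.
        (\<forall>i \<ge> 1. a i \<noteq> {} \<and> a i \<subseteq> {1, 2}) \<and> a 1 = {1, 2} \<and>
        (\<exists>m. (\<Union>i \<in> {1..m}. tq_T R1 R2 a i) = UNIV) \<and>
        c R1 R2 = {(x, y). \<exists>i j. 1 \<le> i \<and> i \<le> j \<and> x \<in> tq_T R1 R2 a i \<and> y \<in> tq_T R1 R2 a j}))"

end

theory Submission
  imports Defs
begin

lemma minS_sub: "minS R S \<subseteq> S" unfolding minS_def by auto

lemma minS_nonempty:
  assumes "tpo R" "finite S" "S \<noteq> {}" shows "minS R S \<noteq> {}"
  using assms(2,3)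
proof (induction S rule: finite_ne_induct)
  case (singleton x)
  have "(x,x) \<in> R" using assms(1) unfolding tpo_def by blast
  then show ?case unfolding minS_def by auto
next
  case (insert x F)
  then obtain m where m: "m \<in> minS R F" by blast
  have xx: "(x,x) \<in> R" using assms(1) unfolding tpo_def by blast
  have tr: "trans R" using assms(1) unfolding tpo_def by blast
  show ?case
  proof (cases "(m,x) \<in> R")
    case True
    then have "m \<in> minS R (insert x F)" using m unfolding minS_def by auto
    then show ?thesis by blast
  next
    case False
    then have xm: "(x,m) \<in> R" using assms(1) unfolding tpo_def by blast
    have "\<forall>y\<in>F. (x,y) \<in> R" using m xm tr unfolding minS_def trans_def by blast
    then have "x \<in> minS R (insert x F)" using xx unfolding minS_def by auto
    then show ?thesis by blast
  qed
qed

lemma minS_restrict: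
  assumes "tpo R" "S \<subseteq> T" "S \<inter> minS R T \<noteq> {}"
  shows "minS R S = S \<inter> minS R T"
proof -
  have tr: "trans R" using assms(1) unfolding tpo_def by blast
  obtain y where y: "y \<in> S" "y \<in> minS R T" using assms(3) by blast
  show ?thesis
  proof
    show "minS R S \<subseteq> S \<inter> minS R T"
    proof
      fix x assume x: "x \<in> minS R S"
      then have "(x,y) \<in> R" using y unfolding minS_def by auto
      then have "\<forall>z\<in>T. (x,z) \<in> R" using y tr unfolding minS_def trans_def by blast
      then show "x \<in> S \<inter> minS R T" using x assms(2) unfolding minS_def by auto
    qed
    show "S \<inter> minS R T \<subseteq> minS R S" using assms(2) unfolding minS_def by auto
  qed
qed

lemma rest_Suc: "tq_rest R1 R2 a (Suc k) = tq_rest R1 R2 a k - tq_T R1 R2 a (Suc k)"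
  by (simp add: tq_T_def)

lemma T_sub: "tq_T R1 R2 a i \<subseteq> tq_rest R1 R2 a (i-1)"
  unfolding tq_T_def by (rule UN_least) (rule minS_sub)

lemma rest_mono: "i \<le> j \<Longrightarrow> tq_rest R1 R2 a j \<subseteq> tq_rest R1 R2 a i"
proof (induction j rule: dec_induct)
  case base then show ?case by simp
next
  case (step n) then show ?case using rest_Suc[of R1 R2 a n] by blast
qed

lemma union_T: "(\<Union>i\<in>{1..m}. tq_T R1 R2 a i) = UNIV - tq_rest R1 R2 a m"
proof (induction m)
  case 0 then show ?case by simp
next
  case (Suc m)
  have "{1..Suc m} = insert (Suc m) {1..m}" by auto
  then show ?case using Suc rest_Suc[of R1 R2 a m] by auto
qed

lemma rest_char: "x \<in> tq_rest R1 R2 a k \<longleftrightarrow> (\<forall>i\<in>{1..k}. x \<notin> tq_T R1 R2 a i)"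
proof -
  have "x \<in> tq_rest R1 R2 a k \<longleftrightarrow> x \<notin> (\<Union>i\<in>{1..k}. tq_T R1 R2 a i)"
    unfolding union_T by simp
  also have "\<dots> \<longleftrightarrow> (\<forall>i\<in>{1..k}. x \<notin> tq_T R1 R2 a i)" by simp
  finally show ?thesis .
qed

lemma T_disj_lt:
  assumes "x \<in> tq_T R1 R2 a i" "x \<in> tq_T R1 R2 a j" "1 \<le> i" "i < j"
  shows False
proof -
  have "x \<in> tq_rest R1 R2 a (j-1)" using assms(2) T_sub[of R1 R2 a j] by blast
  moreover have "i \<le> j-1" using assms(4) by simp
  ultimately have "x \<in> tq_rest R1 R2 a i" using rest_mono[of i "j-1" R1 R2 a] by blast
  then show False using assms(1,3) rest_char[of x R1 R2 a i] by auto
qed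

lemma T_disj:
  assumes "x \<in> tq_T R1 R2 a i" "x \<in> tq_T R1 R2 a j" "1 \<le> i" "1 \<le> j"
  shows "i = j"
proof (rule linorder_cases[of i j])
  assume ij: "i < j" show ?thesis using T_disj_lt[OF assms(1,2,3) ij] by (rule FalseE)
next
  assume "i = j" then show ?thesis .
next
  assume ji: "j < i" show ?thesis using T_disj_lt[OF assms(2,1,4) ji] by (rule FalseE)
qed

lemma forward:
  fixes R1 R2 :: "'w::finite rel"
  assumes t1: "tpo R1" and t2: "tpo R2"
    and a: "\<forall>i \<ge> 1. a i \<noteq> {} \<and> a i \<subseteq> {1, 2}" "a 1 = {1, 2}"
    and cov: "(\<Union>i \<in> {1..m}. tq_T R1 R2 a i) = UNIV"
    and L: "L = {(x, y). \<exists>i j. 1 \<le> i \<and> i \<le> j \<and> x \<in> tq_T R1 R2 a i \<and> y \<in> tq_T R1 R2 a j}"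
  shows "minS L UNIV = minS R1 UNIV \<union> minS R2 UNIV"
    and "minS L S = minS R1 S \<or> minS L S = minS R2 S \<or> minS L S = minS R1 S \<union> minS R2 S"
proof -
  let ?T = "tq_T R1 R2 a"
  have ex: "\<exists>i. 1 \<le> i \<and> x \<in> ?T i" for x
  proof -
    have "x \<in> (\<Union>i \<in> {1..m}. ?T i)" using cov by simp
    then show ?thesis by auto
  qed
  have T1: "?T 1 = minS R1 UNIV \<union> minS R2 UNIV"
    using a(2) by (simp add: tq_T_def pick_def)
  have T1ne: "?T 1 \<noteq> {}" using T1 minS_nonempty[OF t1, of UNIV] by auto
  show "minS L UNIV = minS R1 UNIV \<union> minS R2 UNIV"
  proof -
    have "minS L UNIV = ?T 1"
    proof
      show "?T 1 \<subseteq> minS L UNIV"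
      proof
        fix x assume x: "x \<in> ?T 1"
        have "(x,y) \<in> L" for y using ex[of y] x L by auto
        then show "x \<in> minS L UNIV" unfolding minS_def by auto
      qed
      show "minS L UNIV \<subseteq> ?T 1"
      proof
        fix x assume x: "x \<in> minS L UNIV"
        obtain y where y: "y \<in> ?T 1" using T1ne by blast
        have "(x,y) \<in> L" using x unfolding minS_def by auto
        then obtain i j where ij: "1 \<le> i" "i \<le> j" "x \<in> ?T i" "y \<in> ?T j" using L by auto
        have "j = 1" using T_disj[OF ij(4) y] ij by auto
        then show "x \<in> ?T 1" using ij by auto
      qed
    qed
    then show ?thesis using T1 by simp
  qed
  show "minS L S = minS R1 S \<or> minS L S = minS R2 S \<or> minS L S = minS R1 S \<union> minS R2 S"
  proof (cases "S = {}")
    case True then show ?thesis by (simp add: minS_def)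
  next
    case False
    define P where "P = (\<lambda>i. 1 \<le> i \<and> S \<inter> ?T i \<noteq> {})"
    have "\<exists>i. P i" using False ex unfolding P_def by blast
    define i0 where "i0 = (LEAST i. P i)"
    have Pi0: "P i0" unfolding i0_def using \<open>\<exists>i. P i\<close> LeastI_ex by metis
    have lt: "k < i0 \<Longrightarrow> \<not> P k" for k unfolding i0_def using not_less_Least by blast
    have i0: "1 \<le> i0" "S \<inter> ?T i0 \<noteq> {}" using Pi0 P_def by auto
    let ?r = "tq_rest R1 R2 a (i0 - 1)"
    have Ssub: "S \<subseteq> ?r"
    proof
      fix y assume y: "y \<in> S"
      have "\<forall>k\<in>{1..i0-1}. y \<notin> ?T k"
      proof
        fix k assume "k \<in> {1..i0-1}"
        then have "k < i0" "1 \<le> k" by auto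
        then show "y \<notin> ?T k" using lt[of k] y unfolding P_def by auto
      qed
      then show "y \<in> ?r" using rest_char by metis
    qed
    have minL: "minS L S = S \<inter> ?T i0"
    proof
      show "S \<inter> ?T i0 \<subseteq> minS L S"
      proof
        fix x assume x: "x \<in> S \<inter> ?T i0"
        have "(x,y) \<in> L" if y: "y \<in> S" for y
        proof -
          obtain j where j: "1 \<le> j" "y \<in> ?T j" using ex by blast
          have "\<not> j < i0" using lt[of j] j y unfolding P_def by auto
          then show ?thesis using L x j i0 by auto
        qed
        then show "x \<in> minS L S" using x unfolding minS_def by auto
      qed
      show "minS L S \<subseteq> S \<inter> ?T i0"
      proof
        fix x assume x: "x \<in> minS L S"
        obtain y where y: "y \<in> S" "y \<in> ?T i0" using i0 by blast
        have "(x,y) \<in> L" "x \<in> S" using x y unfolding minS_def by auto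
        then obtain i j where ij: "1 \<le> i" "i \<le> j" "x \<in> ?T i" "y \<in> ?T j" using L by auto
        have "j = i0" using T_disj[OF ij(4) y(2)] ij i0 by auto
        have "\<not> i < i0" using lt[of i] ij \<open>x \<in> S\<close> unfolding P_def by auto
        then have "i = i0" using ij \<open>j = i0\<close> by auto
        then show "x \<in> S \<inter> ?T i0" using ij \<open>x \<in> S\<close> by auto
      qed
    qed
    define M1 where "M1 = minS R1 ?r"
    define M2 where "M2 = minS R2 ?r"
    have ai: "a i0 = {1} \<or> a i0 = {2} \<or> a i0 = {1,2}" using a(1) i0(1) by blast
    have Tc: "?T i0 = (\<Union>j\<in>a i0. minS (pick R1 R2 j) ?r)" unfolding tq_T_def by simp
    have e1: "S \<inter> M1 \<noteq> {} \<Longrightarrow> minS R1 S = S \<inter> M1"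
      unfolding M1_def using minS_restrict[OF t1 Ssub] by blast
    have e2: "S \<inter> M2 \<noteq> {} \<Longrightarrow> minS R2 S = S \<inter> M2"
      unfolding M2_def using minS_restrict[OF t2 Ssub] by blast
    have ne: "S \<inter> ?T i0 \<noteq> {}" using i0(2) .
    consider "a i0 = {1}" | "a i0 = {2}" | "a i0 = {1,2}" using ai by blast
    then show ?thesis
    proof cases
      case 1
      then have TM: "?T i0 = M1" using Tc by (simp add: pick_def M1_def)
      have "minS L S = minS R1 S" using e1 minL ne unfolding TM by simp
      then show ?thesis by (rule disjI1)
    next
      case 2
      then have TM: "?T i0 = M2" using Tc by (simp add: pick_def M2_def)
      have "minS L S = minS R2 S" using e2 minL ne unfolding TM by simp
      then show ?thesis by (intro disjI2 disjI1)
    next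
      case 3
      then have TM: "?T i0 = M1 \<union> M2" using Tc by (simp add: pick_def M1_def M2_def)
      show ?thesis
      proof (cases "S \<inter> M1 = {}")
        case True
        then have "S \<inter> M2 \<noteq> {}" using ne unfolding TM by blast
        then have "minS L S = minS R2 S" using e2 minL True unfolding TM by blast
        then show ?thesis by (intro disjI2 disjI1)
      next
        case F1: False
        show ?thesis
        proof (cases "S \<inter> M2 = {}")
          case True
          then have "minS L S = minS R1 S" using e1 minL F1 unfolding TM by blast
          then show ?thesis by (rule disjI1)
        next
          case False
          then have "minS L S = minS R1 S \<union> minS R2 S" using e1 e2 F1 minL unfolding TM by blast
          then show ?thesis by (intro disjI2)
        qed
      qed
    qed
  qed
qed

primrec crest :: "'w rel \<Rightarrow> nat \<Rightarrow> 'w set" where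
  "crest C 0 = UNIV"
| "crest C (Suc i) = crest C i - minS C (crest C i)"

definition choice :: "'w rel \<Rightarrow> 'w rel \<Rightarrow> 'w rel \<Rightarrow> 'w set \<Rightarrow> nat set" where
  "choice C R1 R2 S = (if minS C S = minS R1 S \<union> minS R2 S then {1,2}
     else if minS C S = minS R1 S then {1} else {2})"

lemma choice_ok:
  assumes "minS C S = minS R1 S \<or> minS C S = minS R2 S \<or> minS C S = minS R1 S \<union> minS R2 S"
  shows "(\<Union>j\<in>choice C R1 R2 S. minS (pick R1 R2 j) S) = minS C S"
  using assms unfolding choice_def by (auto simp: pick_def)

lemma choice_range: "choice C R1 R2 S \<noteq> {} \<and> choice C R1 R2 S \<subseteq> {1,2}"
  unfolding choice_def by auto

lemma crest_card:
  fixes C :: "'w::finite rel"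
  assumes "tpo C"
  shows "crest C i = {} \<or> card (crest C i) + i \<le> card (UNIV :: 'w set)"
proof (induction i)
  case 0 then show ?case by simp
next
  case (Suc i)
  show ?case
  proof (cases "crest C i = {}")
    case True then show ?thesis by simp
  next
    case False
    then have "minS C (crest C i) \<noteq> {}" using minS_nonempty[OF assms] by simp
    then have "crest C (Suc i) \<subset> crest C i" using minS_sub[of C "crest C i"] by auto
    then have "card (crest C (Suc i)) < card (crest C i)" by (simp add: psubset_card_mono)
    then show ?thesis using Suc False by auto
  qed
qed

lemma backward:
  fixes R1 R2 C :: "'w::finite rel"
  assumes t1: "tpo R1" and t2: "tpo R2" and tC: "tpo C"
    and bas: "minS C UNIV = minS R1 UNIV \<union> minS R2 UNIV"
    and tri: "\<And>S. minS C S = minS R1 S \<or> minS C S = minS R2 S \<or> minS C S = minS R1 S \<union> minS R2 S"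
  shows "\<exists>a :: nat \<Rightarrow> nat set.
        (\<forall>i \<ge> 1. a i \<noteq> {} \<and> a i \<subseteq> {1, 2}) \<and> a 1 = {1, 2} \<and>
        (\<exists>m. (\<Union>i \<in> {1..m}. tq_T R1 R2 a i) = UNIV) \<and>
        C = {(x, y). \<exists>i j. 1 \<le> i \<and> i \<le> j \<and> x \<in> tq_T R1 R2 a i \<and> y \<in> tq_T R1 R2 a j}"
proof -
  define a where "a = (\<lambda>i. choice C R1 R2 (crest C (i - 1)))"
  let ?T = "tq_T R1 R2 a"
  let ?r = "tq_rest R1 R2 a"
  have tr: "trans C" using tC unfolding tpo_def by blast
  have A1: "\<forall>i \<ge> 1. a i \<noteq> {} \<and> a i \<subseteq> {1, 2}" unfolding a_def using choice_range by blast
  have A2: "a 1 = {1,2}" unfolding a_def choice_def using bas by simp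
  have rr: "?r i = crest C i" for i
  proof (induction i)
    case 0 then show ?case by simp
  next
    case (Suc i)
    have "?r (Suc i) = ?r i - (\<Union>j\<in>a (Suc i). minS (pick R1 R2 j) (?r i))" by simp
    also have "\<dots> = crest C i - minS C (crest C i)"
      using Suc choice_ok[OF tri] unfolding a_def by simp
    finally show ?case by simp
  qed
  have TT: "?T i = minS C (crest C (i - 1))" if "1 \<le> i" for i
  proof -
    have "?T i = (\<Union>j\<in>a i. minS (pick R1 R2 j) (crest C (i - 1)))" unfolding tq_T_def rr by simp
    then show ?thesis unfolding a_def using choice_ok[OF tri] by simp
  qed
  define m where "m = Suc (card (UNIV :: 'w set))"
  have "crest C m = {}" using crest_card[OF tC, of m] unfolding m_def by auto
  then have cov: "(\<Union>i \<in> {1..m}. ?T i) = UNIV" using union_T[of R1 R2 a m] rr by simp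
  have ex: "\<exists>i. 1 \<le> i \<and> x \<in> ?T i" for x
  proof -
    have "x \<in> (\<Union>i \<in> {1..m}. ?T i)" using cov by simp
    then show ?thesis by auto
  qed
  have rel: "C = {(x, y). \<exists>i j. 1 \<le> i \<and> i \<le> j \<and> x \<in> ?T i \<and> y \<in> ?T j}"
  proof (intro set_eqI iffI)
    fix p assume p: "p \<in> C"
    obtain x y where pxy: "p = (x,y)" by (cases p)
    obtain i where i: "1 \<le> i" "x \<in> ?T i" using ex by blast
    obtain j where j: "1 \<le> j" "y \<in> ?T j" using ex by blast
    have "i \<le> j"
    proof (rule ccontr)
      assume "\<not> i \<le> j"
      then have ji: "j < i" by simp
      have "x \<in> ?r (i-1)" using i T_sub[of R1 R2 a i] by blast
      moreover have "j-1 \<le> i-1" using ji by simp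
      ultimately have xr: "x \<in> ?r (j-1)" using rest_mono[of "j-1" "i-1" R1 R2 a] by blast
      have ymin: "y \<in> minS C (crest C (j - 1))" using j TT by auto
      have "\<forall>z\<in>crest C (j-1). (x,z) \<in> C"
        using ymin p pxy tr unfolding minS_def trans_def by blast
      then have "x \<in> minS C (crest C (j - 1))" using xr rr unfolding minS_def by auto
      then have "x \<in> ?T j" using TT j by auto
      then show False using T_disj[OF i(2) _ i(1) j(1)] ji by auto
    qed
    then show "p \<in> {(x, y). \<exists>i j. 1 \<le> i \<and> i \<le> j \<and> x \<in> ?T i \<and> y \<in> ?T j}"
      using i j pxy by auto
  next
    fix p assume "p \<in> {(x, y). \<exists>i j. 1 \<le> i \<and> i \<le> j \<and> x \<in> ?T i \<and> y \<in> ?T j}"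
    then obtain x y i j where pxy: "p = (x,y)" and ij: "1 \<le> i" "i \<le> j" "x \<in> ?T i" "y \<in> ?T j"
      by auto
    have "y \<in> ?r (j-1)" using ij T_sub[of R1 R2 a j] by blast
    moreover have "i-1 \<le> j-1" using ij by simp
    ultimately have "y \<in> ?r (i-1)" using rest_mono[of "i-1" "j-1" R1 R2 a] by blast
    then have "y \<in> crest C (i-1)" using rr by simp
    moreover have "x \<in> minS C (crest C (i - 1))" using TT ij by auto
    ultimately show "p \<in> C" using pxy unfolding minS_def by auto
  qed
  show ?thesis
    apply (rule exI[of _ a])
    using A1 A2 cov rel by (intro conjI) blast+
qed

theorem proposition4:
  fixes c :: "'w::finite rel \<Rightarrow> 'w rel \<Rightarrow> 'w rel"
  assumes "combinator c"
  shows "teamqueue c \<longleftrightarrow> basic c \<and> TRI c"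
proof
  assume tq: "teamqueue c"
  have "minS (c R1 R2) UNIV = minS R1 UNIV \<union> minS R2 UNIV \<and>
        (minS (c R1 R2) S = minS R1 S \<or> minS (c R1 R2) S = minS R2 S \<or>
         minS (c R1 R2) S = minS R1 S \<union> minS R2 S)"
    if t: "tpo R1" "tpo R2" for R1 R2 :: "'w rel" and S
  proof -
    obtain a where a: "(\<forall>i \<ge> 1. a i \<noteq> {} \<and> a i \<subseteq> {1, 2}) \<and> a 1 = {1, 2} \<and>
      (\<exists>m. (\<Union>i \<in> {1..m}. tq_T R1 R2 a i) = UNIV) \<and>
      c R1 R2 = {(x, y). \<exists>i j. 1 \<le> i \<and> i \<le> j \<and> x \<in> tq_T R1 R2 a i \<and> y \<in> tq_T R1 R2 a j}"
      using tq[unfolded teamqueue_def, rule_format, OF t] by (rule exE)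
    from a obtain m where m: "(\<Union>i \<in> {1..m}. tq_T R1 R2 a i) = UNIV" by (elim conjE exE)
    note a1 = conjunct1[OF a] and a2 = conjunct1[OF conjunct2[OF a]]
      and a4 = conjunct2[OF conjunct2[OF conjunct2[OF a]]]
    from forward[OF t a1 a2 m a4] show ?thesis by (intro conjI)
  qed
  then show "basic c \<and> TRI c" unfolding basic_def TRI_def by blast
next
  assume bt: "basic c \<and> TRI c"
  show "teamqueue c" unfolding teamqueue_def
  proof (intro allI impI)
    fix R1 R2 :: "'w rel" assume t1: "tpo R1" and t2: "tpo R2"
    have tC: "tpo (c R1 R2)" using assms t1 t2 unfolding combinator_def by blast
    have bas: "minS (c R1 R2) UNIV = minS R1 UNIV \<union> minS R2 UNIV"
      using bt t1 t2 unfolding basic_def by blast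
    have tri: "\<And>S. minS (c R1 R2) S = minS R1 S \<or> minS (c R1 R2) S = minS R2 S \<or>
        minS (c R1 R2) S = minS R1 S \<union> minS R2 S"
      using bt t1 t2 unfolding TRI_def by blast
    show "\<exists>a :: nat \<Rightarrow> nat set.
        (\<forall>i \<ge> 1. a i \<noteq> {} \<and> a i \<subseteq> {1, 2}) \<and> a 1 = {1, 2} \<and>
        (\<exists>m. (\<Union>i \<in> {1..m}. tq_T R1 R2 a i) = UNIV) \<and>
        c R1 R2 = {(x, y). \<exists>i j. 1 \<le> i \<and> i \<le> j \<and> x \<in> tq_T R1 R2 a i \<and> y \<in> tq_T R1 R2 a j}"
      by (rule backward[OF t1 t2 tC bas tri])
  qed
qed

end
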